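(* Let $\frac12<p<1$ and let $f:\mathbb{Z}^+\to[0,\infty)$ be monotonically increasing (non-decreasing). Let $\{N_j\}_{j\ge0}$ be the discrete-time, time-inhomogeneous Markov chain on $\mathbb{N}$ with $N_0=1$, $N_1\sim\mathrm{Bern}\big(\frac{1-p}{p}\big)$, and, for $j\ge1$, conditionally on $N_j$, $N_{j+1}\sim\mathrm{Bin}\big(N_j,\frac{1-p}{p}\big)+\mathrm{Poiss}\big(\frac{1-p}{p}f(j)\big)$ with independent summands. Let $\mathbf{P}^*$ denote its law and $K=\#\{j\in\mathbb{Z}^+:N_j=0\}$. If $$\sum_{j=1}^{\infty}e^{-\frac{1-p}{2p-1}f(j)}<\infty,$$ then $\mathbf{P}^*(K<\infty)=1$. *)

theory Defs
  imports "HOL-Probability.Probability"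
begin

text \<open>Poisson distribution with rate lam \<ge> 0; the library's poisson_pmf requires
  lam > 0, so Poiss(0) is the point mass at 0.\<close>
definition poiss :: "real \<Rightarrow> nat pmf" where
  "poiss lam = (if 0 < lam then poisson_pmf lam else return_pmf 0)"

text \<open>Transition law of the chain from time j (state n) to time j+1, with q = (1-p)/p:
  N_1 ~ Bern(q) (as a 0/1 natural number); for j \<ge> 1,
  N_(j+1) ~ Bin(n, q) + Poiss(q f(j)) with independent summands.\<close>
definition step_pmf :: "real \<Rightarrow> (nat \<Rightarrow> real) \<Rightarrow> nat \<Rightarrow> nat \<Rightarrow> nat pmf" where
  "step_pmf p f j n =
     (if j = 0 then map_pmf (\<lambda>b. if b then 1 else 0) (bernoulli_pmf ((1 - p) / p))
      else map_pmf (\<lambda>(a, b). a + b)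
             (pair_pmf (binomial_pmf n ((1 - p) / p)) (poiss ((1 - p) / p * f j))))"

end

theory Submission
  imports Defs
begin


lemma poiss_pgf:
  assumes "0 \<le> lam" "0 \<le> s"
  shows "(\<integral>\<^sup>+k. ennreal (s ^ k) \<partial>measure_pmf (poiss lam)) = ennreal (exp (lam * (s - 1)))"
proof (cases "lam = 0")
  case True
  then show ?thesis by (simp add: poiss_def)
next
  case False
  with assms have lp: "0 < lam" by auto
  have "(\<integral>\<^sup>+k. ennreal (s ^ k) \<partial>measure_pmf (poiss lam))
      = (\<integral>\<^sup>+k. ennreal (pmf (poisson_pmf lam) k) * ennreal (s ^ k) \<partial>count_space UNIV)"
    using lp by (simp add: poiss_def nn_integral_measure_pmf)
  also have "\<dots> = (\<Sum>k. ennreal (exp (-lam) * ((lam * s) ^ k /\<^sub>R fact k)))"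
    unfolding nn_integral_count_space_nat
  proof (rule suminf_cong)
    fix k
    show "ennreal (pmf (poisson_pmf lam) k) * ennreal (s ^ k) = ennreal (exp (-lam) * ((lam * s) ^ k /\<^sub>R fact k))"
      using lp assms by (simp add: ennreal_mult'[symmetric] power_mult_distrib divide_inverse mult_ac)
  qed
  also have "\<dots> = ennreal (exp (-lam) * exp (lam * s))"
    apply (rule suminf_ennreal_eq)
    using lp assms apply (simp)
    by (intro sums_mult exp_converges)
  also have "exp (-lam) * exp (lam * s) = exp (lam * (s - 1))"
    by (simp add: exp_add[symmetric] algebra_simps)
  finally show ?thesis .
qed

lemma binom_pgf:
  assumes "0 \<le> q" "q \<le> 1" "0 \<le> s"
  shows "(\<integral>\<^sup>+k. ennreal (s ^ k) \<partial>measure_pmf (binomial_pmf n q)) = ennreal ((q * s + (1 - q)) ^ n)"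
proof -
  have "(\<integral>\<^sup>+k. ennreal (s ^ k) \<partial>measure_pmf (binomial_pmf n q))
       = (\<Sum>k\<in>{..n}. ennreal (s ^ k) * pmf (binomial_pmf n q) k)"
    apply (rule nn_integral_measure_pmf_support)
    using assms by (auto simp: set_pmf_binomial_eq split: if_splits)
  also have "\<dots> = (\<Sum>k\<in>{..n}. ennreal (of_nat (n choose k) * (q * s) ^ k * (1 - q) ^ (n - k)))"
    using assms by (intro sum.cong refl) (simp add: ennreal_mult'[symmetric] power_mult_distrib mult_ac)
  also have "\<dots> = ennreal ((q * s + (1 - q)) ^ n)"
    using assms by (subst sum_ennreal) (auto simp: binomial_ring)
  finally show ?thesis .
qed


lemma step_pgf:
  assumes "1/2 < p" "p < 1" "1 \<le> j" "0 \<le> f j" "0 \<le> s"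
  shows "(\<integral>\<^sup>+y. ennreal (s ^ y) \<partial>measure_pmf (step_pmf p f j x))
       = ennreal (((1 - p) / p * s + (1 - (1 - p) / p)) ^ x * exp ((1 - p) / p * f j * (s - 1)))"
proof -
  define q where "q = (1 - p) / p"
  have q: "0 \<le> q" "q \<le> 1" using assms by (auto simp: q_def field_simps)
  have "(\<integral>\<^sup>+y. ennreal (s ^ y) \<partial>measure_pmf (step_pmf p f j x))
     = (\<integral>\<^sup>+a. \<integral>\<^sup>+b. ennreal (s ^ a) * ennreal (s ^ b) \<partial>measure_pmf (poiss (q * f j)) \<partial>measure_pmf (binomial_pmf x q))"
    using assms unfolding step_pmf_def q_def[symmetric]
    by (simp add: nn_integral_pair_pmf' power_add ennreal_mult')
  also have "\<dots> = (\<integral>\<^sup>+a. ennreal (s ^ a) * ennreal (exp (q * f j * (s - 1))) \<partial>measure_pmf (binomial_pmf x q))"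
    using assms q by (simp add: nn_integral_cmult poiss_pgf)
  also have "\<dots> = ennreal ((q * s + (1 - q)) ^ x) * ennreal (exp (q * f j * (s - 1)))"
    using assms q by (simp add: nn_integral_multc binom_pgf)
  finally show ?thesis using assms q by (simp add: q_def ennreal_mult')
qed

lemma step0_pgf:
  assumes "1/2 < p" "p < 1" "0 \<le> s"
  shows "(\<integral>\<^sup>+y. ennreal (s ^ y) \<partial>measure_pmf (step_pmf p f 0 x))
       = ennreal ((1 - p) / p * s + (1 - (1 - p) / p))"
proof -
  define q where "q = (1 - p) / p"
  have q: "0 \<le> q" "q \<le> 1" using assms by (auto simp: q_def field_simps)
  have "(\<integral>\<^sup>+y. ennreal (s ^ y) \<partial>measure_pmf (step_pmf p f 0 x))
     = (\<integral>\<^sup>+b. ennreal (if b then s else 1) \<partial>measure_pmf (bernoulli_pmf q))"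
    unfolding step_pmf_def q_def[symmetric] apply (simp add: if_distrib) by (intro nn_integral_cong) simp
  also have "\<dots> = (\<Sum>b\<in>UNIV. ennreal (if b then s else 1) * pmf (bernoulli_pmf q) b)"
    by (rule nn_integral_measure_pmf_support) auto
  also have "\<dots> = ennreal (q * s + (1 - q))"
    using q assms by (simp add: UNIV_bool ennreal_mult'[symmetric] ennreal_plus[symmetric] mult.commute del: ennreal_plus)
  finally show ?thesis by (simp add: q_def)
qed

primrec rpath :: "real \<Rightarrow> (nat \<Rightarrow> real) \<Rightarrow> nat \<Rightarrow> nat list pmf" where
  "rpath p f 0 = return_pmf [1]"
| "rpath p f (Suc n) = bind_pmf (rpath p f n) (\<lambda>ys. map_pmf (\<lambda>y. y # ys) (step_pmf p f n (hd ys)))"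

lemma rpath_length: "ys \<in> set_pmf (rpath p f n) \<Longrightarrow> length ys = Suc n"
  by (induction n arbitrary: ys) auto

lemma pmf_rpath_Suc:
  "pmf (rpath p f (Suc n)) (y # ys) = pmf (rpath p f n) ys * pmf (step_pmf p f n (hd ys)) y"
proof -
  have "pmf (rpath p f (Suc n)) (y # ys)
      = (\<integral>x. indicator {ys} x * pmf (step_pmf p f n (hd ys)) y \<partial>measure_pmf (rpath p f n))"
  proof -
    have eq: "pmf (map_pmf (\<lambda>y. y # x) (step_pmf p f n (hd x))) (y # ys) = indicator {ys} x * pmf (step_pmf p f n (hd ys)) y" for x
    proof (cases "x = ys")
      case True
      then show ?thesis using pmf_map_inj'[of "\<lambda>y. y # ys" "step_pmf p f n (hd ys)" y]
        by (simp add: inj_def)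
    next
      case False
      then show ?thesis by (simp add: pmf_map vimage_def)
    qed
    show ?thesis by (simp add: pmf_bind eq)
  qed
  also have "\<dots> = pmf (rpath p f n) ys * pmf (step_pmf p f n (hd ys)) y"
    by (simp add: measure_pmf_single)
  finally show ?thesis .
qed


lemma pmf_rpath:
  "length xs = Suc n \<Longrightarrow> pmf (rpath p f n) (rev xs) =
     (if xs ! 0 = 1 then 1 else 0) * (\<Prod>i<n. pmf (step_pmf p f i (xs ! i)) (xs ! Suc i))"
proof (induction n arbitrary: xs)
  case 0
  then obtain x where "xs = [x]" by (cases xs) auto
  then show ?case by (auto simp: pmf_return)
next
  case (Suc n)
  then obtain zs y where xs: "xs = zs @ [y]" by (cases xs rule: rev_exhaust) auto
  with Suc.prems have lz: "length zs = Suc n" by simp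
  have hd: "hd (rev zs) = zs ! n" using lz by (simp add: hd_rev, subst last_conv_nth, auto)
  have "pmf (rpath p f (Suc n)) (rev xs) = pmf (rpath p f n) (rev zs) * pmf (step_pmf p f n (zs ! n)) y"
    using xs hd pmf_rpath_Suc[of p f n y "rev zs"] by simp
  also have "\<dots> = (if zs ! 0 = 1 then 1 else 0) * (\<Prod>i<n. pmf (step_pmf p f i (zs ! i)) (zs ! Suc i))
        * pmf (step_pmf p f n (zs ! n)) y"
    using Suc.IH[OF lz] by simp
  also have "\<dots> = (if xs ! 0 = 1 then 1 else 0) * (\<Prod>i<Suc n. pmf (step_pmf p f i (xs ! i)) (xs ! Suc i))"
  proof -
    have "(\<Prod>i<n. pmf (step_pmf p f i (xs ! i)) (xs ! Suc i)) = (\<Prod>i<n. pmf (step_pmf p f i (zs ! i)) (zs ! Suc i))"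
      using lz xs by (intro prod.cong) (auto simp: nth_append)
    moreover have "xs ! n = zs ! n" "xs ! Suc n = y" "xs ! 0 = zs ! 0" using lz xs by (auto simp: nth_append)
    ultimately show ?thesis by (simp add: mult_ac)
  qed
  finally show ?case .
qed

lemma rpath_pgf:
  assumes p: "1/2 < p" "p < 1" and fnn: "\<And>j. 1 \<le> j \<Longrightarrow> 0 \<le> f j"
  shows "(\<integral>\<^sup>+ys. ennreal ((1 - ((1-p)/p)^m) ^ hd ys) \<partial>measure_pmf (rpath p f n))
    = ennreal ((1 - ((1-p)/p)^(n+m)) * exp (- (\<Sum>k\<in>{1..<n}. f k * ((1-p)/p)^(n-k+m))))"
proof (induction n arbitrary: m)
  case 0
  then show ?case by simp
next
  case (Suc n)
  define q where "q = (1 - p) / p"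
  have q: "0 \<le> q" "q \<le> 1" using p by (auto simp: q_def field_simps)
  have s0: "0 \<le> 1 - q ^ m" using q by (simp add: power_le_one)
  have sq: "q * (1 - q ^ m) + (1 - q) = 1 - q ^ Suc m" by (simp add: algebra_simps)
  have s1: "0 \<le> 1 - q * q ^ m" using q by (metis diff_ge_0_iff_ge power_Suc power_le_one)
  have sq2: "q * (1 - q ^ m) + (1 - q) = 1 - q * q ^ m" by (simp add: algebra_simps)
  have base: "(\<integral>\<^sup>+ys. ennreal ((1 - q^m) ^ hd ys) \<partial>measure_pmf (rpath p f (Suc n)))
     = (\<integral>\<^sup>+ys. (\<integral>\<^sup>+y. ennreal ((1 - q^m) ^ y) \<partial>measure_pmf (step_pmf p f n (hd ys))) \<partial>measure_pmf (rpath p f n))"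
    by simp
  show ?case
  proof (cases "n = 0")
    case True
    have "(\<integral>\<^sup>+ys. (\<integral>\<^sup>+y. ennreal ((1 - q^m) ^ y) \<partial>measure_pmf (step_pmf p f n (hd ys))) \<partial>measure_pmf (rpath p f n))
        = (\<integral>\<^sup>+y. ennreal ((1 - q^m) ^ y) \<partial>measure_pmf (step_pmf p f 0 1))" using True by simp
    also have "\<dots> = ennreal (q * (1-q^m) + (1-q))" using step0_pgf[OF p s0] by (simp add: q_def)
    also have "\<dots> = ennreal (1 - q^Suc m)" using sq by (simp only:)
    finally show ?thesis unfolding q_def[symmetric] base using True by simp
  next
    case False
    have "(\<integral>\<^sup>+ys. (\<integral>\<^sup>+y. ennreal ((1 - q^m) ^ y) \<partial>measure_pmf (step_pmf p f n (hd ys))) \<partial>measure_pmf (rpath p f n))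
       = (\<integral>\<^sup>+ys. ennreal ((1 - q ^ Suc m) ^ hd ys) * ennreal (exp (q * f n * (- (q ^ m)))) \<partial>measure_pmf (rpath p f n))"
      using False p fnn[of n] s0 q
      by (intro nn_integral_cong) (simp add: step_pgf q_def[symmetric] power_le_one sq2, metis ennreal_mult' s1 zero_le_power)
    also have "\<dots> = ennreal ((1 - q^(n + Suc m)) * exp (- (\<Sum>k\<in>{1..<n}. f k * q^(n-k+Suc m)))) * ennreal (exp (q * f n * (- (q ^ m))))"
      using Suc.IH[of "Suc m"] by (simp add: nn_integral_multc q_def)
    also have "\<dots> = ennreal ((1 - q^(Suc n + m)) * exp (- (\<Sum>k\<in>{1..<Suc n}. f k * q^(Suc n-k+m))))"
    proof -
      define A where "A = (\<Sum>k\<in>{1..<n}. f k * q^(n-k+Suc m))"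
      have B: "(\<Sum>k\<in>{1..<Suc n}. f k * q^(Suc n-k+m)) = A + f n * q ^ Suc m"
        using False unfolding A_def by (simp add: sum.atLeastLessThan_Suc Suc_diff_le)
      have X: "0 \<le> 1 - q^(n + Suc m)" using q by (simp only: diff_ge_0_iff_ge power_le_one)
      have e: "exp (- (A + f n * q ^ Suc m)) = exp (- A) * exp (q * f n * (- (q ^ m)))"
        by (simp add: exp_add[symmetric] algebra_simps)
      show ?thesis unfolding B A_def[symmetric] e
        using X by (simp add: ennreal_mult'[symmetric] mult.assoc)
    qed
    finally show ?thesis unfolding q_def[symmetric] base .
  qed
qed



lemma summable_div2:
  fixes g :: "nat \<Rightarrow> real"
  assumes sg: "summable g" and g0: "\<And>n. 0 \<le> g n"
  shows "summable (\<lambda>n. g (n div 2))"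
proof (rule summableI_nonneg_bounded)
  show "0 \<le> g (n div 2)" for n using g0 .
  have eq: "(\<Sum>n<2*K. g (n div 2)) = 2 * (\<Sum>k<K. g k)" for K
    by (induction K) (auto simp: algebra_simps)
  fix N
  have "(\<Sum>n<N. g (n div 2)) \<le> (\<Sum>n<2*N. g (n div 2))"
    by (rule sum_mono2) (auto simp: g0)
  also have "\<dots> = 2 * (\<Sum>k<N. g k)" by (rule eq)
  also have "\<dots> \<le> 2 * suminf g" using sum_le_suminf[OF sg, of "{..<N}"] g0 by auto
  finally show "(\<Sum>n<N. g (n div 2)) \<le> 2 * suminf g" .
qed

lemma geo_sum:
  fixes q :: real
  assumes "0 < q" "q < 1"
  shows "(\<Sum>k\<in>{m..<m+L}. q^(m+L-k)) = q * (1 - q^L) / (1 - q)"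
proof -
  have "(\<Sum>k\<in>{m..<m+L}. q^(m+L-k)) = (\<Sum>i\<in>{0..<L}. q^(m+L-(i+m)))"
    using sum.shift_bounds_nat_ivl[of "\<lambda>k. q^(m+L-k)" 0 m L] by (simp add: add.commute)
  also have "\<dots> = (\<Sum>i<L. q * q^(L - Suc i))"
  proof (intro sum.cong)
    fix i assume "i \<in> {..<L}"
    then have "m+L-(i+m) = Suc (L - Suc i)" by auto
    then show "q^(m+L-(i+m)) = q * q^(L - Suc i)" by simp
  qed auto
  also have "\<dots> = q * (\<Sum>i<L. q^(L - Suc i))" by (simp add: sum_distrib_left)
  also have "(\<Sum>i<L. q^(L - Suc i)) = (\<Sum>i<L. q^i)" by (rule sum.nat_diff_reindex)
  also have "\<dots> = (1 - q^L) / (1 - q)" using assms by (simp add: sum_gp_strict)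
  finally show ?thesis by simp
qed

lemma exp_neg_le_inv: "0 < (x::real) \<Longrightarrow> exp (- x) \<le> 1 / x"
proof -
  assume x: "0 < x"
  have "x \<le> exp x" using exp_ge_add_one_self[of x] by linarith
  then show ?thesis using x by (simp add: exp_minus field_simps)
qed

lemma key_bound:
  fixes q :: real and f :: "nat \<Rightarrow> real"
  assumes q: "0 < q" "q < 1"
    and fnn: "\<And>j. 1 \<le> j \<Longrightarrow> 0 \<le> f j"
    and fmono: "\<And>i j. 1 \<le> i \<Longrightarrow> i \<le> j \<Longrightarrow> f i \<le> f j"
    and n: "2 \<le> n"
  shows "exp (- (\<Sum>k\<in>{1..<n}. f k * q^(n-k)))
      \<le> exp (q/(1-q)) * (exp (- (q/(1-q)) * f (n div 2)) + q^(n div 2) / (q/(1-q)))"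
proof -
  define m where "m = n div 2"
  define L where "L = n - m"
  define c where "c = q/(1-q)"
  have c0: "0 < c" using q by (simp add: c_def)
  have m1: "1 \<le> m" using n by (simp add: m_def)
  have mn: "m + L = n" "m \<le> L" using n by (auto simp: m_def L_def)
  have qL: "0 \<le> q^L" "q^L \<le> 1" "q^L \<le> q^m" using q mn by (auto simp: power_le_one power_decreasing)
  have qLpos: "0 < q^L" using q by simp
  define S where "S = (\<Sum>k\<in>{1..<n}. f k * q^(n-k))"
  have "(\<Sum>k\<in>{m..<n}. f k * q^(n-k)) \<le> S"
    unfolding S_def using m1 q fnn by (intro sum_mono2) auto
  moreover have "f m * (\<Sum>k\<in>{m..<n}. q^(n-k)) \<le> (\<Sum>k\<in>{m..<n}. f k * q^(n-k))"
    unfolding sum_distrib_left using q fmono[OF m1] by (intro sum_mono mult_right_mono) auto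
  moreover have "(\<Sum>k\<in>{m..<n}. q^(n-k)) = c * (1 - q^L)"
    using geo_sum[OF q, of m L] mn by (simp add: c_def)
  ultimately have ST: "c * f m * (1 - q^L) \<le> S" by (simp add: mult_ac)
  have fm0: "0 \<le> f m" using fnn m1 by simp
  show ?thesis
  proof (cases "f m * q^L \<le> 1")
    case True
    have "c * f m - c \<le> c * f m * (1 - q^L)"
      using True c0 by (simp add: algebra_simps)
    then have "exp (- S) \<le> exp (c - c * f m)" using ST by simp
    also have "\<dots> = exp c * exp (- c * f m)" by (simp add: exp_add[symmetric])
    also have "\<dots> \<le> exp c * (exp (- c * f m) + q^m / c)"
      using c0 q by (intro mult_left_mono) auto
    finally show ?thesis unfolding S_def c_def m_def .
  next
    case False
    then have fmL: "1 / q^L \<le> f m" using qLpos by (simp add: field_simps)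
    have "c * (1 / q^L) * (1 - q^L) \<le> c * f m * (1 - q^L)"
      using fmL c0 qL by (intro mult_right_mono mult_left_mono) auto
    also have "c * (1 / q^L) * (1 - q^L) = c / q^L - c" using qLpos q by (simp add: algebra_simps diff_divide_distrib)
    finally have "exp (- S) \<le> exp (c - c / q^L)" using ST by simp
    also have "\<dots> = exp c * exp (- (c / q^L))" by (simp add: exp_add[symmetric])
    also have "exp (- (c / q^L)) \<le> 1 / (c / q^L)"
      using c0 qLpos by (intro exp_neg_le_inv) simp
    also have "1 / (c / q^L) = q^L / c" by simp
    also have "\<dots> \<le> q^m / c" using qL c0 by (simp add: divide_right_mono)
    also have "\<dots> \<le> exp (- c * f m) + q^m / c" by simp
    finally show ?thesis unfolding S_def c_def m_def by simp
  qed
qed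


lemma sum_bound:
  fixes q :: real and f :: "nat \<Rightarrow> real"
  assumes q: "0 < q" "q < 1"
    and fnn: "\<And>j. 1 \<le> j \<Longrightarrow> 0 \<le> f j"
    and fmono: "\<And>i j. 1 \<le> i \<Longrightarrow> i \<le> j \<Longrightarrow> f i \<le> f j"
    and summ: "summable (\<lambda>j. exp (- (q/(1-q)) * f (Suc j)))"
  shows "summable (\<lambda>n. exp (- (\<Sum>k\<in>{1..<n}. f k * q^(n-k))))"
proof -
  define c where "c = q/(1-q)"
  have c0: "0 < c" using q by (simp add: c_def)
  define g where "g k = exp (- c * f k) + q^k / c" for k
  have "summable (\<lambda>k. exp (- c * f k))"
    using summ summable_Suc_iff[of "\<lambda>k. exp (- c * f k)"] by (simp add: c_def)
  moreover have "summable (\<lambda>k. q^k / c)"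
    using q by (intro summable_divide summable_geometric) simp
  ultimately have "summable g" unfolding g_def by (rule summable_add)
  moreover have "\<And>k. 0 \<le> g k" using q c0 by (simp add: g_def)
  ultimately have "summable (\<lambda>n. g (n div 2))" by (rule summable_div2)
  then have "summable (\<lambda>n. exp c * g (n div 2))" by (rule summable_mult)
  then show ?thesis
  proof (rule summable_comparison_test'[where N=2])
    fix n :: nat assume "2 \<le> n"
    then show "norm (exp (- (\<Sum>k\<in>{1..<n}. f k * q^(n-k)))) \<le> exp c * g (n div 2)"
      using key_bound[OF q fnn fmono] by (simp add: g_def c_def)
  qed
qed


theorem proposition8:
  fixes p :: real and f :: "nat \<Rightarrow> real"
    and M :: "'a measure" and N :: "nat \<Rightarrow> 'a \<Rightarrow> nat"
  assumes p_gt: "1/2 < p" and p_lt: "p < 1"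
    and f_nonneg: "\<And>j. 1 \<le> j \<Longrightarrow> 0 \<le> f j"
    and f_mono: "\<And>i j. 1 \<le> i \<Longrightarrow> i \<le> j \<Longrightarrow> f i \<le> f j"
    and M_prob: "prob_space M"
    and N_meas: "\<And>j. N j \<in> measurable M (count_space UNIV)"
    and N_law: "\<And>n xs. length xs = Suc n \<Longrightarrow>
        measure M {\<omega> \<in> space M. \<forall>i\<le>n. N i \<omega> = xs ! i} =
          (if xs ! 0 = 1 then 1 else 0) *
          (\<Prod>i<n. pmf (step_pmf p f i (xs ! i)) (xs ! Suc i))"
    and summ: "summable (\<lambda>j. exp (- ((1 - p) / (2 * p - 1)) * f (Suc j)))"
  shows "measure M {\<omega> \<in> space M. finite {j::nat. 1 \<le> j \<and> N j \<omega> = 0}} = 1"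
proof -
  interpret prob_space M by (rule M_prob)
  note [measurable] = N_meas
  define q where "q = (1 - p) / p"
  have q: "0 < q" "q < 1" using p_gt p_lt by (auto simp: q_def field_simps)
  have cq: "(1 - p) / (2 * p - 1) = q / (1 - q)"
    using p_gt p_lt by (simp add: q_def field_simps)
  have summ': "summable (\<lambda>j. exp (- (q/(1-q)) * f (Suc j)))" using summ by (simp add: cq)
  define S where "S n = (\<Sum>k\<in>{1..<n}. f k * q^(n-k))" for n
  have sumS: "summable (\<lambda>n. exp (- S n))"
    unfolding S_def by (rule sum_bound[OF q f_nonneg f_mono summ'])
  define path where "path n \<omega> = rev (map (\<lambda>i. N i \<omega>) [0..<Suc n])" for n \<omega>
  have pre: "{\<omega> \<in> space M. path n \<omega> = ys} =
      (if length ys = Suc n then {\<omega> \<in> space M. \<forall>i\<le>n. N i \<omega> = rev ys ! i} else {})" for n ys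
  proof (cases "length ys = Suc n")
    case True
    have "path n \<omega> = ys \<longleftrightarrow> (\<forall>i\<le>n. N i \<omega> = rev ys ! i)" for \<omega>
    proof -
      have "path n \<omega> = ys \<longleftrightarrow> map (\<lambda>i. N i \<omega>) [0..<Suc n] = rev ys"
        unfolding path_def by (metis rev_rev_ident)
      also have "\<dots> \<longleftrightarrow> (\<forall>i<Suc n. N i \<omega> = rev ys ! i)"
        using True by (auto simp: list_eq_iff_nth_eq simp del: upt_Suc)
      finally show ?thesis by (simp add: less_Suc_eq_le)
    qed
    then show ?thesis using True by auto
  next
    case False
    then show ?thesis by (auto simp: path_def)
  qed
  have meas_path: "path n \<in> measurable M (count_space UNIV)" for n
  proof (subst measurable_count_space_eq2_countable, safe)
    fix ys :: "nat list"
    have "{\<omega> \<in> space M. \<forall>i\<le>n. N i \<omega> = rev ys ! i} \<in> sets M" by measurable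
    then show "path n -` {ys} \<inter> space M \<in> sets M"
      using pre[of n ys] by (auto simp: vimage_def Int_def conj_commute split: if_splits)
  qed auto
  have distr_eq: "distr M (count_space UNIV) (path n) = measure_pmf (rpath p f n)" for n
  proof (rule measure_eqI_countable[where A=UNIV])
    fix ys :: "nat list"
    have "emeasure (distr M (count_space UNIV) (path n)) {ys} = emeasure M {\<omega> \<in> space M. path n \<omega> = ys}"
      using meas_path by (subst emeasure_distr) (auto intro!: arg_cong[where f="emeasure M"])
    also have "\<dots> = ennreal (pmf (rpath p f n) ys)"
    proof (cases "length ys = Suc n")
      case True
      have "emeasure M {\<omega> \<in> space M. path n \<omega> = ys} = ennreal (measure M {\<omega> \<in> space M. \<forall>i\<le>n. N i \<omega> = rev ys ! i})"
        using pre[of n ys] True by (simp add: emeasure_eq_measure)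
      also have "\<dots> = ennreal (pmf (rpath p f n) (rev (rev ys)))"
        using N_law[of "rev ys" n] pmf_rpath[of "rev ys" n p f] True by simp
      finally show ?thesis by simp
    next
      case False
      then have "pmf (rpath p f n) ys = 0" using rpath_length[of ys p f n] by (auto simp: pmf_eq_0_set_pmf)
      then show ?thesis using pre[of n ys] False by (simp del: Collect_empty_eq)
    qed
    also have "\<dots> = emeasure (measure_pmf (rpath p f n)) {ys}" by (simp add: emeasure_pmf_single)
    finally show "emeasure (distr M (count_space UNIV) (path n)) {ys} = emeasure (measure_pmf (rpath p f n)) {ys}" .
  qed auto
  have P0: "measure M {\<omega> \<in> space M. N n \<omega> = 0} \<le> exp (- S n)" for n
  proof -
    have hd: "hd (path n \<omega>) = N n \<omega>" for \<omega> by (simp add: path_def hd_rev)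
    have "measure M {\<omega> \<in> space M. N n \<omega> = 0} = measure (distr M (count_space UNIV) (path n)) {ys. hd ys = 0}"
      using meas_path by (subst measure_distr) (auto simp: hd vimage_def Int_def conj_commute intro!: arg_cong[where f="measure M"])
    also have "\<dots> = measure (measure_pmf (rpath p f n)) {ys. hd ys = 0}" by (simp add: distr_eq)
    also have "ennreal \<dots> = emeasure (measure_pmf (rpath p f n)) {ys. hd ys = 0}"
      by (simp add: measure_pmf.emeasure_eq_measure)
    also have "\<dots> = (\<integral>\<^sup>+ys. ennreal ((1 - ((1-p)/p)^0) ^ hd ys) \<partial>measure_pmf (rpath p f n))"
    proof -
      have "(\<lambda>ys. ennreal ((1 - ((1-p)/p)^0) ^ hd ys)) = indicator {ys. hd ys = 0}"
        by (auto simp: indicator_def fun_eq_iff)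
      then show ?thesis by simp
    qed
    also have "\<dots> = ennreal ((1 - q^n) * exp (- S n))"
      using rpath_pgf[OF p_gt p_lt f_nonneg, where m=0 and n=n] by (simp add: q_def S_def)
    finally have "measure M {\<omega> \<in> space M. N n \<omega> = 0} = (1 - q^n) * exp (- S n)"
      using q by (subst (asm) ennreal_inj) (auto simp: power_le_one)
    also have "\<dots> \<le> exp (- S n)" using q by (simp add: mult_le_cancel_right1)
    finally show ?thesis .
  qed
  define A where "A n = {\<omega> \<in> space M. N n \<omega> = 0}" for n
  have A_sets: "A n \<in> sets M" for n unfolding A_def by measurable
  have "summable (\<lambda>n. measure M (A n))"
    by (rule summable_comparison_test'[OF sumS]) (auto simp: A_def P0)
  then have ae: "AE \<omega> in M. eventually (\<lambda>n. \<omega> \<in> space M - A n) sequentially"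
    using A_sets by (intro borel_cantelli_AE1) (auto simp: emeasure_eq_measure)
  have fin_iff: "finite {j::nat. 1 \<le> j \<and> N j \<omega> = 0} \<longleftrightarrow> (\<exists>K::nat. \<forall>j. 1 \<le> j \<and> N j \<omega> = 0 \<longrightarrow> j < K)" for \<omega>
    by (simp add: finite_nat_set_iff_bounded)
  have B_sets: "{\<omega> \<in> space M. finite {j::nat. 1 \<le> j \<and> N j \<omega> = 0}} \<in> sets M"
    unfolding fin_iff by measurable
  have "AE \<omega> in M. finite {j::nat. 1 \<le> j \<and> N j \<omega> = 0}"
    using ae
  proof (rule AE_mp, intro AE_I2 impI)
    fix \<omega> assume \<omega>: "\<omega> \<in> space M" and ev: "eventually (\<lambda>n. \<omega> \<in> space M - A n) sequentially"
    then obtain K where "\<forall>n\<ge>K. \<omega> \<in> space M - A n" by (auto simp: eventually_sequentially)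
    then have K: "\<And>j. K \<le> j \<Longrightarrow> N j \<omega> \<noteq> 0" by (simp add: A_def)
    have "\<forall>j. 1 \<le> j \<and> N j \<omega> = 0 \<longrightarrow> j < K"
    proof (intro allI impI)
      fix j assume "1 \<le> j \<and> N j \<omega> = 0"
      then show "j < K" using K[of j] by (cases "K \<le> j") auto
    qed
    then show "finite {j::nat. 1 \<le> j \<and> N j \<omega> = 0}" unfolding fin_iff by blast
  qed
  then show ?thesis using prob_Collect_eq_1[OF B_sets] by simp
qed

end
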